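(* Let $G=\langle V,E\rangle$ be a DAG and let $E_1\subseteq E$ be such that $G$ has no $E_1$-shortcuts. Then for every topological sorting $\tau$ of $G$, $$|V|-|\pi^{E_1}_\tau| = |E_1|-\sum_{P_1,P_2\in\pi^{E_1}_\tau,\ P_1\neq P_2}|P_1\to_{E_1}P_2|.$$
   Context: A DAG is a finite directed acyclic graph. A topological sorting of $G$ is a bijection $\tau:V\to\{1,\dots,|V|\}$ with $\tau(u)<\tau(v)$ for every arc $\langle u,v\rangle\in E$. A path $\langle u_1,\dots,u_n\rangle$ ($n\ge1$) is an $E_1$-path if $\langle u_i,u_{i+1}\rangle\in E_1$ for all $i<n$; its length is $n-1$. An arc $\langle v,u\rangle\in E_1$ is an $E_1$-shortcut if there is an $E_1$-path from $v$ to $u$ of length at least $2$. An $E_1$-path $\langle u_1,\dots,u_n\rangle$ is a $\tau,E_1$-path if $\tau(u_{i+1})=\tau(u_i)+1$ for all $i<n$; it is maximal if its vertex set is not contained in the vertex set of any other $\tau,E_1$-path. $\pi^{E_1}_\tau$ denotes the set of vertex sets of maximal $\tau,E_1$-paths. For $V_1,V_2\subseteq V$, $V_1\to_{E_1}V_2=\{\langle v_1,v_2\rangle\in E_1:v_1\in V_1,v_2\in V_2\}$. *)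

theory Defs
  imports Main
begin

definition dag :: "'a set \<Rightarrow> ('a \<times> 'a) set \<Rightarrow> bool" where
  "dag V E \<longleftrightarrow> finite V \<and> E \<subseteq> V \<times> V \<and> acyclic E"

definition topsort :: "'a set \<Rightarrow> ('a \<times> 'a) set \<Rightarrow> ('a \<Rightarrow> nat) \<Rightarrow> bool" where
  "topsort V E \<tau> \<longleftrightarrow> bij_betw \<tau> V {1..card V} \<and> (\<forall>(u,v)\<in>E. \<tau> u < \<tau> v)"

text \<open>An E1-path (as a nonempty list of vertices of V); its length is length - 1.\<close>
definition is_path :: "'a set \<Rightarrow> ('a \<times> 'a) set \<Rightarrow> 'a list \<Rightarrow> bool" where
  "is_path V E1 p \<longleftrightarrow> p \<noteq> [] \<and> set p \<subseteq> V \<and>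
     (\<forall>i. Suc i < length p \<longrightarrow> (p ! i, p ! Suc i) \<in> E1)"

definition is_shortcut :: "'a set \<Rightarrow> ('a \<times> 'a) set \<Rightarrow> 'a \<times> 'a \<Rightarrow> bool" where
  "is_shortcut V E1 a \<longleftrightarrow> a \<in> E1 \<and>
     (\<exists>p. is_path V E1 p \<and> hd p = fst a \<and> last p = snd a \<and> length p - 1 \<ge> 2)"

definition tau_path :: "'a set \<Rightarrow> ('a \<times> 'a) set \<Rightarrow> ('a \<Rightarrow> nat) \<Rightarrow> 'a list \<Rightarrow> bool" where
  "tau_path V E1 \<tau> p \<longleftrightarrow> is_path V E1 p \<and>
     (\<forall>i. Suc i < length p \<longrightarrow> \<tau> (p ! Suc i) = \<tau> (p ! i) + 1)"

definition max_tau_path :: "'a set \<Rightarrow> ('a \<times> 'a) set \<Rightarrow> ('a \<Rightarrow> nat) \<Rightarrow> 'a list \<Rightarrow> bool" where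
  "max_tau_path V E1 \<tau> p \<longleftrightarrow> tau_path V E1 \<tau> p \<and>
     \<not> (\<exists>q. tau_path V E1 \<tau> q \<and> set p \<subset> set q)"

definition pi_part :: "'a set \<Rightarrow> ('a \<times> 'a) set \<Rightarrow> ('a \<Rightarrow> nat) \<Rightarrow> 'a set set" where
  "pi_part V E1 \<tau> = {set p | p. max_tau_path V E1 \<tau> p}"

definition arcs_between :: "('a \<times> 'a) set \<Rightarrow> 'a set \<Rightarrow> 'a set \<Rightarrow> ('a \<times> 'a) set" where
  "arcs_between E1 V1 V2 = {(v1, v2) \<in> E1. v1 \<in> V1 \<and> v2 \<in> V2}"

end

theory Submission imports Defs begin

definition lk :: "('a \<times> 'a) set \<Rightarrow> (nat \<Rightarrow> 'a) \<Rightarrow> nat \<Rightarrow> nat \<Rightarrow> bool" where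
  "lk E1 s a b \<longleftrightarrow> (\<forall>i. a \<le> i \<and> Suc i < b \<longrightarrow> (s i, s (Suc i)) \<in> E1)"

lemma lk_mono: "lk E1 s a b \<Longrightarrow> a \<le> c \<Longrightarrow> d \<le> b \<Longrightarrow> lk E1 s c d"
  unfolding lk_def by auto

lemma lk_union:
  assumes A: "lk E1 s a b" "lk E1 s c d" "a < d" "c < b"
  shows "lk E1 s (min a c) (max b d)"
  unfolding lk_def
proof (intro allI impI)
  fix i assume i: "min a c \<le> i \<and> Suc i < max b d"
  show "(s i, s (Suc i)) \<in> E1"
  proof (cases "a \<le> i \<and> Suc i < b")
    case True then show ?thesis using A(1) by (simp add: lk_def)
  next
    case False
    then have "c \<le> i \<and> Suc i < d" using i A(3,4) by auto
    then show ?thesis using A(2) by (simp add: lk_def)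
  qed
qed

context
  fixes V :: "'a set" and E E1 :: "('a \<times> 'a) set" and \<tau> :: "'a \<Rightarrow> nat"
  assumes dag: "dag V E" and sub: "E1 \<subseteq> E" and nosc: "\<not> (\<exists>a. is_shortcut V E1 a)"
    and ts: "topsort V E \<tau>"
begin

abbreviation "sg \<equiv> the_inv_into V \<tau>"

lemma bij: "bij_betw \<tau> V {1..card V}" using ts by (simp add: topsort_def)

lemma sg_in: "1 \<le> i \<Longrightarrow> i \<le> card V \<Longrightarrow> sg i \<in> V"
  using bij_betw_the_inv_into[OF bij] by (auto simp: bij_betw_def)

lemma tau_sg: "1 \<le> i \<Longrightarrow> i \<le> card V \<Longrightarrow> \<tau> (sg i) = i"
  using f_the_inv_into_f_bij_betw[OF bij] by auto

lemma sg_tau: "v \<in> V \<Longrightarrow> sg (\<tau> v) = v"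
  using bij by (simp add: bij_betw_def the_inv_into_f_f)

lemma tau_rng: "v \<in> V \<Longrightarrow> 1 \<le> \<tau> v \<and> \<tau> v \<le> card V"
  using bij by (auto simp: bij_betw_def)

lemma E1V: "E1 \<subseteq> V \<times> V" using dag sub by (auto simp: dag_def)

lemma arc_lt: "(u, v) \<in> E1 \<Longrightarrow> \<tau> u < \<tau> v"
  using ts sub by (auto simp: topsort_def)

lemma sg_inj: "inj_on sg {1..card V}"
  using bij_betw_the_inv_into[OF bij] by (auto simp: bij_betw_def)

lemma T1:
  assumes "tau_path V E1 \<tau> p"
  shows "1 \<le> \<tau> (hd p) \<and> \<tau> (hd p) + length p \<le> card V + 1 \<and>
         p = map sg [\<tau> (hd p)..<\<tau> (hd p) + length p] \<and> lk E1 sg (\<tau> (hd p)) (\<tau> (hd p) + length p)"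
proof -
  let ?a = "\<tau> (hd p)"
  have ne: "p \<noteq> []" and sV: "set p \<subseteq> V"
    and e: "\<And>i. Suc i < length p \<Longrightarrow> (p ! i, p ! Suc i) \<in> E1"
    and t: "\<And>i. Suc i < length p \<Longrightarrow> \<tau> (p ! Suc i) = \<tau> (p ! i) + 1"
    using assms by (auto simp: tau_path_def is_path_def)
  have h: "i < length p \<Longrightarrow> \<tau> (p ! i) = ?a + i" for i
  proof (induction i)
    case 0 then show ?case using ne by (simp add: hd_conv_nth)
  next
    case (Suc i) then show ?case using t[of i] by simp
  qed
  have inV: "i < length p \<Longrightarrow> p ! i \<in> V" for i using sV nth_mem by blast
  have pi: "i < length p \<Longrightarrow> p ! i = sg (?a + i)" for i
    using sg_tau[OF inV[of i]] h[of i] by simp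
  have a1: "1 \<le> ?a" using tau_rng[OF inV[of 0]] ne h[of 0] by auto
  have a2: "?a + length p \<le> card V + 1"
    using tau_rng[OF inV[of "length p - 1"]] ne h[of "length p - 1"] by auto
  have m: "p = map sg [?a..<?a + length p]"
    by (rule nth_equalityI) (auto simp: pi)
  have l: "lk E1 sg ?a (?a + length p)"
    unfolding lk_def
  proof (intro allI impI)
    fix i assume "?a \<le> i \<and> Suc i < ?a + length p"
    then have "Suc (i - ?a) < length p" and "i = ?a + (i - ?a)" by auto
    then show "(sg i, sg (Suc i)) \<in> E1"
      using e[of "i - ?a"] pi[of "i - ?a"] pi[of "Suc (i - ?a)"] by (metis Suc_lessD add_Suc_right)
  qed
  show ?thesis using a1 a2 m l by blast
qed

lemma T2:
  assumes "1 \<le> a" "a < b" "b \<le> card V + 1" "lk E1 sg a b"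
  shows "tau_path V E1 \<tau> (map sg [a..<b])"
  unfolding tau_path_def is_path_def
proof (intro conjI allI impI)
  show "map sg [a..<b] \<noteq> []" using assms by simp
  show "set (map sg [a..<b]) \<subseteq> V" using assms sg_in by auto
  fix i assume "Suc i < length (map sg [a..<b])"
  then have i: "Suc (a + i) < b" by simp
  then show "(map sg [a..<b] ! i, map sg [a..<b] ! Suc i) \<in> E1"
    using assms(4) by (simp add: lk_def nth_upt)
  show "\<tau> (map sg [a..<b] ! Suc i) = \<tau> (map sg [a..<b] ! i) + 1"
    using i assms by (simp add: tau_sg)
qed


lemma pi_char:
  assumes "P \<in> pi_part V E1 \<tau>"
  shows "\<exists>a b. 1 \<le> a \<and> a < b \<and> b \<le> card V + 1 \<and> lk E1 sg a b \<and> P = sg ` {a..<b}"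
proof -
  obtain p where p: "max_tau_path V E1 \<tau> p" "P = set p" using assms by (auto simp: pi_part_def)
  then have tp: "tau_path V E1 \<tau> p" by (simp add: max_tau_path_def)
  then have ne: "p \<noteq> []" by (simp add: tau_path_def is_path_def)
  note T = T1[OF tp]
  have "set p = sg ` {\<tau> (hd p)..<\<tau> (hd p) + length p}"
    using T by (metis set_map set_upt)
  then show ?thesis using T ne p(2) by (intro exI[of _ "\<tau> (hd p)"] exI[of _ "\<tau> (hd p) + length p"]) auto
qed

lemma pi_sub: "P \<in> pi_part V E1 \<tau> \<Longrightarrow> P \<subseteq> V \<and> P \<noteq> {}"
proof -
  assume "P \<in> pi_part V E1 \<tau>"
  then obtain a b where ab: "1 \<le> a" "a < b" "b \<le> card V + 1" "P = sg ` {a..<b}"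
    using pi_char by blast
  have "P \<subseteq> V" using ab sg_in by auto
  moreover have "sg a \<in> P" using ab by auto
  ultimately show ?thesis by blast
qed

lemma pi_disj:
  assumes P: "P \<in> pi_part V E1 \<tau>" and Q: "Q \<in> pi_part V E1 \<tau>" and x: "x \<in> P" "x \<in> Q"
  shows "P = Q"
proof -
  obtain p where p: "max_tau_path V E1 \<tau> p" "P = set p" using P by (auto simp: pi_part_def)
  obtain q where q: "max_tau_path V E1 \<tau> q" "Q = set q" using Q by (auto simp: pi_part_def)
  obtain a b where ab: "1 \<le> a" "a < b" "b \<le> card V + 1" "lk E1 sg a b" "P = sg ` {a..<b}"
    using pi_char[OF P] by blast
  obtain c d where cd: "1 \<le> c" "c < d" "d \<le> card V + 1" "lk E1 sg c d" "Q = sg ` {c..<d}"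
    using pi_char[OF Q] by blast
  obtain i where i: "i \<in> {a..<b}" "x = sg i" using x(1) ab(5) by blast
  obtain j where j: "j \<in> {c..<d}" "x = sg j" using x(2) cd(5) by blast
  have "i \<in> {1..card V}" "j \<in> {1..card V}" using i(1) j(1) ab cd by auto
  then have "i = j" using inj_onD[OF sg_inj, of i j] i(2) j(2) by simp
  then have ov: "a < d" "c < b" using i(1) j(1) by auto
  define r where "r = map sg [min a c..<max b d]"
  have tr: "tau_path V E1 \<tau> r" unfolding r_def
    using T2[of "min a c" "max b d"] lk_union[OF ab(4) cd(4) ov] ab cd by auto
  have sr: "set r = sg ` {min a c..<max b d}" by (simp add: r_def)
  have "{a..<b} \<subseteq> {min a c..<max b d}" by auto
  then have Pr: "P \<subseteq> set r" unfolding ab(5) sr by (rule image_mono)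
  have "{c..<d} \<subseteq> {min a c..<max b d}" by auto
  then have Qr: "Q \<subseteq> set r" unfolding cd(5) sr by (rule image_mono)
  have "\<not> set p \<subset> set r" using p(1) tr unfolding max_tau_path_def by blast
  then have "P = set r" using Pr p(2) by blast
  moreover have "\<not> set q \<subset> set r" using q(1) tr unfolding max_tau_path_def by blast
  then have "Q = set r" using Qr q(2) by blast
  ultimately show ?thesis by simp
qed

lemma pi_cover:
  assumes v: "v \<in> V"
  shows "\<exists>P \<in> pi_part V E1 \<tau>. v \<in> P"
proof -
  define S where "S = {set p | p. tau_path V E1 \<tau> p \<and> v \<in> set p}"
  have SV: "S \<subseteq> Pow V" by (auto simp: S_def tau_path_def is_path_def)
  have fV: "finite V" using dag by (simp add: dag_def)
  have fS: "finite S" using SV fV by (meson finite_Pow_iff finite_subset)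
  have "tau_path V E1 \<tau> [v]" using v by (simp add: tau_path_def is_path_def)
  then have "{v} \<in> S" unfolding S_def by force
  then have neS: "S \<noteq> {}" by auto
  have "Max (card ` S) \<in> card ` S" using fS neS by (intro Max_in) auto
  then obtain P where PS: "P \<in> S" and Pm: "card P = Max (card ` S)" by (metis imageE)
  obtain p where p: "tau_path V E1 \<tau> p" "v \<in> set p" "P = set p" using PS by (auto simp: S_def)
  have "max_tau_path V E1 \<tau> p"
    unfolding max_tau_path_def
  proof (intro conjI notI)
    show "tau_path V E1 \<tau> p" by fact
    assume "\<exists>q. tau_path V E1 \<tau> q \<and> set p \<subset> set q"
    then obtain q where q: "tau_path V E1 \<tau> q" "set p \<subset> set q" by blast
    then have "set q \<in> S" using p(2) by (auto simp: S_def)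
    then have "card (set q) \<le> card P" using Pm fS by simp
    moreover have "card (set p) < card (set q)" using q(2) by (simp add: psubset_card_mono)
    ultimately show False using p(3) by simp
  qed
  then show ?thesis using p by (auto simp: pi_part_def)
qed

lemma pi_arcs:
  assumes P: "P \<in> pi_part V E1 \<tau>"
  shows "card (arcs_between E1 P P) + 1 = card P"
proof -
  obtain a b where ab: "1 \<le> a" "a < b" "b \<le> card V + 1" "lk E1 sg a b" "P = sg ` {a..<b}"
    using pi_char[OF P] by blast
  have sub1: "{a..<b} \<subseteq> {1..card V}" using ab by auto
  have cP: "card P = b - a" using ab(5) card_image[OF inj_on_subset[OF sg_inj sub1]] by simp
  define f where "f = (\<lambda>i. (sg i, sg (Suc i)))"
  have sub2: "{a..<b-1} \<subseteq> {1..card V}" using ab by auto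
  have injf: "inj_on f {a..<b-1}"
    using inj_on_subset[OF sg_inj sub2] by (auto simp: inj_on_def f_def)
  have eq: "arcs_between E1 P P = f ` {a..<b-1}"
  proof
    show "f ` {a..<b-1} \<subseteq> arcs_between E1 P P"
    proof
      fix e assume "e \<in> f ` {a..<b-1}"
      then obtain i where i: "i \<in> {a..<b-1}" "e = f i" by blast
      then have "(sg i, sg (Suc i)) \<in> E1" using ab(4) by (auto simp: lk_def)
      then show "e \<in> arcs_between E1 P P" using i ab(5) by (auto simp: arcs_between_def f_def)
    qed
  next
    show "arcs_between E1 P P \<subseteq> f ` {a..<b-1}"
    proof
      fix e assume e: "e \<in> arcs_between E1 P P"
      then obtain i j where ij: "i \<in> {a..<b}" "j \<in> {a..<b}" "e = (sg i, sg j)" "(sg i, sg j) \<in> E1"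
        using ab(5) by (auto simp: arcs_between_def)
      have "\<tau> (sg i) < \<tau> (sg j)" using arc_lt ij(4) by blast
      then have lt: "i < j" using tau_sg ij ab by auto
      show "e \<in> f ` {a..<b-1}"
      proof (cases "j = Suc i")
        case True then show ?thesis using ij lt by (auto simp: f_def)
      next
        case False
        then have lt2: "Suc i < j" using lt by simp
        have "tau_path V E1 \<tau> (map sg [i..<Suc j])"
          using T2[of i "Suc j"] lk_mono[OF ab(4), of i "Suc j"] ij ab lt by auto
        then have "is_path V E1 (map sg [i..<Suc j])" by (simp add: tau_path_def)
        moreover have "hd (map sg [i..<Suc j]) = sg i" using lt by (simp add: hd_map upt_conv_Cons)
        moreover have "last (map sg [i..<Suc j]) = sg j" using lt by (simp add: last_map)
        moreover have "length (map sg [i..<Suc j]) - 1 \<ge> 2" using lt2 by simp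
        ultimately have "is_shortcut V E1 (sg i, sg j)" using ij(4) unfolding is_shortcut_def
          by (metis fst_conv snd_conv)
        then show ?thesis using nosc by blast
      qed
    qed
  qed
  have "card (arcs_between E1 P P) = b - 1 - a" using eq card_image[OF injf] by simp
  then show ?thesis using cP ab by simp
qed


lemma main:
  "int (card V) - int (card (pi_part V E1 \<tau>)) =
         int (card E1) -
         (\<Sum>(P1, P2) \<in> {(P1, P2). P1 \<in> pi_part V E1 \<tau> \<and> P2 \<in> pi_part V E1 \<tau> \<and> P1 \<noteq> P2}.
            int (card (arcs_between E1 P1 P2)))"
proof -
  let ?Pi = "pi_part V E1 \<tau>"
  define g where "g = (\<lambda>(P1, P2). int (card (arcs_between E1 P1 P2)))"
  define Of where "Of = {(P1, P2). P1 \<in> ?Pi \<and> P2 \<in> ?Pi \<and> P1 \<noteq> P2}"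
  define D where "D = (\<lambda>P. (P, P)) ` ?Pi"
  have fV: "finite V" using dag by (simp add: dag_def)
  have fE: "finite E1" using E1V fV by (meson finite_SigmaI finite_subset)
  have fPi: "finite ?Pi" using pi_sub fV by (meson PowI finite_Pow_iff finite_subset subsetI)
  have UV: "\<Union>?Pi = V" using pi_sub pi_cover by blast
  have pw: "pairwise disjnt ?Pi" unfolding pairwise_def disjnt_def using pi_disj by blast
  have finA: "\<And>A. A \<in> ?Pi \<Longrightarrow> finite A" using pi_sub fV finite_subset by blast
  have cU: "card (\<Union>?Pi) = sum card ?Pi" by (rule card_Union_disjoint[OF pw finA])
  have cV: "card V = sum card ?Pi" using cU UV by simp
  have UE: "E1 = (\<Union>x\<in>?Pi \<times> ?Pi. arcs_between E1 (fst x) (snd x))"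
  proof
    show "E1 \<subseteq> (\<Union>x\<in>?Pi \<times> ?Pi. arcs_between E1 (fst x) (snd x))"
    proof
      fix e assume e: "e \<in> E1"
      obtain u w where uw: "e = (u, w)" by fastforce
      have "u \<in> V" "w \<in> V" using e uw E1V by auto
      then obtain P Q where "P \<in> ?Pi" "u \<in> P" "Q \<in> ?Pi" "w \<in> Q" using pi_cover by blast
      then have "(P, Q) \<in> ?Pi \<times> ?Pi" "e \<in> arcs_between E1 (fst (P, Q)) (snd (P, Q))"
        using e uw by (auto simp: arcs_between_def)
      then show "e \<in> (\<Union>x\<in>?Pi \<times> ?Pi. arcs_between E1 (fst x) (snd x))" by blast
    qed
  qed (auto simp: arcs_between_def)
  have cE: "card E1 = (\<Sum>x\<in>?Pi \<times> ?Pi. card (arcs_between E1 (fst x) (snd x)))"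
  proof -
    have f2: "\<forall>x\<in>?Pi \<times> ?Pi. finite (arcs_between E1 (fst x) (snd x))"
      using fE by (auto simp: arcs_between_def intro: finite_subset[OF _ fE])
    have d2: "\<forall>x\<in>?Pi \<times> ?Pi. \<forall>y\<in>?Pi \<times> ?Pi. x \<noteq> y \<longrightarrow>
        arcs_between E1 (fst x) (snd x) \<inter> arcs_between E1 (fst y) (snd y) = {}"
    proof (intro ballI impI)
      fix x y assume x: "x \<in> ?Pi \<times> ?Pi" and y: "y \<in> ?Pi \<times> ?Pi" and xy: "x \<noteq> y"
      show "arcs_between E1 (fst x) (snd x) \<inter> arcs_between E1 (fst y) (snd y) = {}"
      proof (rule ccontr)
        assume "arcs_between E1 (fst x) (snd x) \<inter> arcs_between E1 (fst y) (snd y) \<noteq> {}"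
        then obtain u w where "u \<in> fst x" "u \<in> fst y" "w \<in> snd x" "w \<in> snd y"
          by (auto simp: arcs_between_def)
        then have "fst x = fst y" "snd x = snd y" using x y pi_disj by (auto simp: mem_Times_iff)
        then show False using xy by (simp add: prod_eq_iff)
      qed
    qed
    show ?thesis by (subst UE) (rule card_UN_disjoint[OF _ f2 d2], simp add: fPi)
  qed
  have cEi: "int (card E1) = sum g (?Pi \<times> ?Pi)"
  proof -
    have "int (card E1) = (\<Sum>x\<in>?Pi \<times> ?Pi. int (card (arcs_between E1 (fst x) (snd x))))"
      by (simp only: cE of_nat_sum)
    also have "\<dots> = sum g (?Pi \<times> ?Pi)" unfolding g_def by (rule sum.cong) (auto simp: case_prod_beta)
    finally show ?thesis .
  qed
  have split: "?Pi \<times> ?Pi = D \<union> Of" "D \<inter> Of = {}" by (auto simp: D_def Of_def)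
  have fD1: "finite D" unfolding D_def using fPi by simp
  have fD2: "finite Of" using fPi split(1) by (metis finite_SigmaI finite_Un)
  have sD: "sum g D = (\<Sum>P\<in>?Pi. int (card P) - 1)"
  proof -
    have inj: "inj_on (\<lambda>P. (P, P)) ?Pi" by (simp add: inj_on_def)
    have "sum g D = sum (g \<circ> (\<lambda>P. (P, P))) ?Pi" unfolding D_def by (rule sum.reindex[OF inj])
    also have "\<dots> = (\<Sum>P\<in>?Pi. int (card P) - 1)"
    proof (rule sum.cong)
      fix P assume "P \<in> ?Pi"
      then have "card (arcs_between E1 P P) + 1 = card P" by (rule pi_arcs)
      then show "(g \<circ> (\<lambda>P. (P, P))) P = int (card P) - 1" by (simp add: g_def)
    qed simp
    finally show ?thesis .
  qed
  have s1: "sum g (?Pi \<times> ?Pi) = sum g D + sum g Of"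
    unfolding split(1) by (rule sum.union_disjoint[OF fD1 fD2 split(2)])
  have s2: "(\<Sum>P\<in>?Pi. int (card P) - 1) = int (card V) - int (card ?Pi)"
  proof -
    have "(\<Sum>P\<in>?Pi. int (card P) - 1) = (\<Sum>P\<in>?Pi. int (card P)) - (\<Sum>P\<in>?Pi. 1)"
      by (rule sum_subtractf)
    also have "(\<Sum>P\<in>?Pi. int (card P)) = int (card V)" unfolding cV by (rule of_nat_sum[symmetric])
    also have "(\<Sum>P\<in>?Pi. (1::int)) = int (card ?Pi)" by simp
    finally show ?thesis .
  qed
  have "int (card V) - int (card ?Pi) = int (card E1) - sum g Of"
    using cEi s1 sD s2 by linarith
  then show ?thesis unfolding g_def Of_def .
qed

end

theorem lemma3p1:
  fixes V :: "'a set" and E E1 :: "('a \<times> 'a) set" and \<tau> :: "'a \<Rightarrow> nat"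
  assumes "dag V E"
    and "E1 \<subseteq> E"
    and "\<not> (\<exists>a. is_shortcut V E1 a)"
    and "topsort V E \<tau>"
  shows "int (card V) - int (card (pi_part V E1 \<tau>)) =
         int (card E1) -
         (\<Sum>(P1, P2) \<in> {(P1, P2). P1 \<in> pi_part V E1 \<tau> \<and> P2 \<in> pi_part V E1 \<tau> \<and> P1 \<noteq> P2}.
            int (card (arcs_between E1 P1 P2)))"
  by (rule main[OF assms])

end
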